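(* Let $0<q<1$, let $I=[0,b)$ with $0<b\le\infty$, and let $R,S,T:I\to\mathbb{R}$ be continuous functions such that $1-(1-q)tR(t)>0$ and $1-(1-q)tT(t)>0$ for all $t\in I$. For $x\in I$ put $$\Lambda(x)=\mathbb{1}-(1-q)x\begin{pmatrix}R(x)&S(x)\\0&T(x)\end{pmatrix},\qquad \Lambda(x;q)_n=\Lambda(q^{n-1}x)\cdots\Lambda(qx)\Lambda(x).$$ Then for every $x\in I$ the limit $\Lambda(x;q)_\infty=\lim_{n\to\infty}\Lambda(x;q)_n$ exists and $$\Lambda(x;q)_\infty=\begin{pmatrix}\exp\Big(\frac{1}{1-q}\int_0^x\frac{\ln(1-(1-q)tR(t))}{t}\,d_qt\Big) & B(x)\\[1mm] 0 & \exp\Big(\frac{1}{1-q}\int_0^x\frac{\ln(1-(1-q)tT(t))}{t}\,d_qt\Big)\end{pmatrix},$$ where $$B(x)=-\exp\Big(\frac{1}{1-q}\int_0^x\frac{\ln(1-(1-q)tT(t))}{t}\,d_qt\Big)\int_0^x\frac{S(t)}{1-(1-q)tR(t)}\exp\Big(\frac{1}{1-q}\int_0^t\frac1s\ln\frac{1-(1-q)sR(s)}{1-(1-q)sT(s)}\,d_qs\Big)d_qt.$$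
   Context: The Jackson $q$-integral is $\int_0^x f(t)\,d_qt=\sum_{n=0}^\infty(1-q)q^nx\,f(q^nx)$. In the integrands $\ln(\cdot)/t$, the value at $t=0$ never occurs since the $q$-integral only samples $t=q^nx$; for $x=0$ all $q$-integrals are $0$. $\mathbb{1}$ denotes the $2\times2$ identity matrix. *)

theory Defs
  imports "HOL-Analysis.Analysis"
begin

definition jackson_integral :: "real \<Rightarrow> (real \<Rightarrow> real) \<Rightarrow> real \<Rightarrow> real" where
  "jackson_integral q f x = (\<Sum>n. (1 - q) * q ^ n * x * f (q ^ n * x))"

definition mat2 :: "real \<Rightarrow> real \<Rightarrow> real \<Rightarrow> real \<Rightarrow> real^2^2" where
  "mat2 a b c d = vector [vector [a, b], vector [c, d]]"

definition Lam :: "real \<Rightarrow> (real \<Rightarrow> real) \<Rightarrow> (real \<Rightarrow> real) \<Rightarrow> (real \<Rightarrow> real) \<Rightarrow> real \<Rightarrow> real^2^2" where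
  "Lam q R S T x = mat 1 - ((1 - q) * x) *\<^sub>R mat2 (R x) (S x) 0 (T x)"

fun Lam_prod :: "real \<Rightarrow> (real \<Rightarrow> real) \<Rightarrow> (real \<Rightarrow> real) \<Rightarrow> (real \<Rightarrow> real) \<Rightarrow> real \<Rightarrow> nat \<Rightarrow> real^2^2" where
  "Lam_prod q R S T x 0 = mat 1"
| "Lam_prod q R S T x (Suc n) = Lam q R S T (q ^ n * x) ** Lam_prod q R S T x n"

end

theory Submission
  imports Defs
begin

lemma mat2_nth [simp]:
  "mat2 a b c d $ 1 $ 1 = a" "mat2 a b c d $ 1 $ 2 = b"
  "mat2 a b c d $ 2 $ 1 = c" "mat2 a b c d $ 2 $ 2 = d"
  by (simp_all add: mat2_def)

lemma mat2_eq: "(M::real^2^2) = mat2 (M$1$1) (M$1$2) (M$2$1) (M$2$2)"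
  by (simp add: vec_eq_iff forall_2)

lemma mat2_mult: "mat2 a b c d ** mat2 a' b' c' d' = mat2 (a*a'+b*c') (a*b'+b*d') (c*a'+d*c') (c*b'+d*d')"
  by (simp add: vec_eq_iff forall_2 matrix_matrix_mult_def sum_2)

lemma mat2_one: "mat 1 = mat2 1 0 0 1"
  by (simp add: vec_eq_iff forall_2 mat_def)

lemma Lam_eq: "Lam q R S T y = mat2 (1 - (1-q)*y*R y) (-(1-q)*y*S y) 0 (1 - (1-q)*y*T y)"
  by (simp add: Lam_def vec_eq_iff forall_2 mat_def algebra_simps)

lemma mat2_tendsto:
  assumes "(a \<longlongrightarrow> a0) F" "(b \<longlongrightarrow> b0) F" "(c \<longlongrightarrow> c0) F" "(d \<longlongrightarrow> d0) F"
  shows "((\<lambda>n. mat2 (a n) (b n) (c n) (d n)) \<longlongrightarrow> mat2 a0 b0 c0 d0) F"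
proof (rule vec_tendstoI)
  fix i :: 2
  show "((\<lambda>n. mat2 (a n) (b n) (c n) (d n) $ i) \<longlongrightarrow> mat2 a0 b0 c0 d0 $ i) F"
  proof (rule vec_tendstoI)
    fix j :: 2
    show "((\<lambda>n. mat2 (a n) (b n) (c n) (d n) $ i $ j) \<longlongrightarrow> mat2 a0 b0 c0 d0 $ i $ j) F"
      using assms exhaust_2[of i] exhaust_2[of j] by auto
  qed
qed

lemma ln_bound: "(y::real) \<ge> 1/2 \<Longrightarrow> \<bar>ln y\<bar> \<le> 2 * \<bar>y - 1\<bar>"
proof -
  assume y: "y \<ge> 1/2"
  have "ln y \<le> y - 1" using y by (intro ln_le_minus_one) auto
  moreover have "ln (1/y) \<le> 1/y - 1" using y by (intro ln_le_minus_one) auto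
  hence "- ln y \<le> 1/y - 1" using y by (simp add: ln_div)
  moreover have "1/y - 1 \<le> 2 * \<bar>y - 1\<bar>"
  proof (cases "y < 1")
    case True
    have "1/y \<le> 2" using y by (simp add: field_simps)
    hence "(1 - y) * (1/y) \<le> (1 - y) * 2" using True by (intro mult_left_mono) auto
    thus ?thesis using True y by (simp add: field_simps)
  next
    case False
    hence "1/y \<le> 1" by simp
    thus ?thesis by (smt (verit) abs_ge_zero)
  qed
  ultimately show ?thesis by (smt (verit))
qed

lemma ln_summable:
  fixes r :: "nat \<Rightarrow> real"
  assumes "\<And>k. r k > 0" "\<And>k. \<bar>r k - 1\<bar> \<le> C * q ^ k" "0 < q" "q < 1"
  shows "summable (\<lambda>k. ln (r k))"
proof (rule summable_comparison_test_ev)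
  have "(\<lambda>k. C * q ^ k) \<longlonglongrightarrow> C * 0"
    using assms by (intro tendsto_mult tendsto_const LIMSEQ_power_zero) auto
  hence "eventually (\<lambda>k. C * q ^ k < 1/2) sequentially"
    by (intro order_tendstoD) auto
  thus "eventually (\<lambda>k. norm (ln (r k)) \<le> 2 * C * q ^ k) sequentially"
  proof eventually_elim
    case (elim k)
    have "r k \<ge> 1/2" using assms(2)[of k] elim by (auto simp: abs_if split: if_splits)
    thus ?case using ln_bound[of "r k"] assms(2)[of k] by simp
  qed
  show "summable (\<lambda>k. 2 * C * q ^ k)"
    using assms by (intro summable_mult summable_geometric) auto
qed

lemma prod_lim:
  fixes r :: "nat \<Rightarrow> real"
  assumes "\<And>k. r k > 0" "summable (\<lambda>k. ln (r k))"
  shows "(\<lambda>n. \<Prod>k<n. r k) \<longlonglongrightarrow> exp (\<Sum>k. ln (r k))"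
proof -
  have "(\<lambda>n. \<Prod>k<n. r k) = (\<lambda>n. exp (\<Sum>k<n. ln (r k)))"
    using assms(1) by (simp add: exp_sum)
  thus ?thesis using summable_LIMSEQ[OF assms(2)] by (simp add: tendsto_exp)
qed

lemma cancel_y1: "(y = 0 \<Longrightarrow> L = 0) \<Longrightarrow> (c::real) * y * (1 / y * L) = c * L"
  by (cases "y = 0") auto

lemma cancel_y2: "(y = 0 \<Longrightarrow> L = 0) \<Longrightarrow> (c::real) * y * (L / y) = c * L"
  by (cases "y = 0") auto

lemma bound_on:
  assumes "continuous_on {0..x} (f::real \<Rightarrow> real)"
  obtains M where "\<And>y. y \<in> {0..x} \<Longrightarrow> \<bar>f y\<bar> \<le> M"
proof -
  have "compact (f ` {0..x})" by (intro compact_continuous_image assms) auto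
  then obtain M where "\<forall>z\<in>f ` {0..x}. norm z \<le> M" using compact_imp_bounded bounded_iff by metis
  hence "\<And>y. y \<in> {0..x} \<Longrightarrow> \<bar>f y\<bar> \<le> M" by auto
  thus ?thesis using that by blast
qed

lemma geom_bound:
  assumes "\<And>y. y \<in> {0..x} \<Longrightarrow> \<bar>f y\<bar> \<le> M" "0 \<le> x" "0 < q" "q < (1::real)"
  shows "\<bar>(1 - q) * (q ^ k * x) * f (q ^ k * x)\<bar> \<le> ((1 - q) * x * M) * q ^ k"
proof -
  have "q ^ k \<le> 1" using assms by (simp add: power_le_one)
  hence y: "q ^ k * x \<in> {0..x}" using assms by (auto simp: mult_left_le_one_le)
  have "\<bar>(1 - q) * (q ^ k * x) * f (q ^ k * x)\<bar> = ((1 - q) * (q ^ k * x)) * \<bar>f (q ^ k * x)\<bar>"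
    using assms by (simp add: abs_mult)
  also have "\<dots> \<le> ((1 - q) * (q ^ k * x)) * M"
    using assms y by (intro mult_left_mono) auto
  finally show ?thesis by (simp add: algebra_simps)
qed

theorem proposition1:
  fixes q :: real and b :: ereal and R S T :: "real \<Rightarrow> real"
  defines "I \<equiv> {t::real. 0 \<le> t \<and> ereal t < b}"
  assumes q: "0 < q" "q < 1"
    and b: "0 < b"
    and cont: "continuous_on I R" "continuous_on I S" "continuous_on I T"
    and posR: "\<And>t. t \<in> I \<Longrightarrow> 1 - (1 - q) * t * R t > 0"
    and posT: "\<And>t. t \<in> I \<Longrightarrow> 1 - (1 - q) * t * T t > 0"
    and x: "x \<in> I"
  shows "(\<lambda>n. Lam_prod q R S T x n) \<longlonglongrightarrow>
    mat2 (exp (1 / (1 - q) * jackson_integral q (\<lambda>t. ln (1 - (1 - q) * t * R t) / t) x))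
         (- exp (1 / (1 - q) * jackson_integral q (\<lambda>t. ln (1 - (1 - q) * t * T t) / t) x)
            * jackson_integral q (\<lambda>t. S t / (1 - (1 - q) * t * R t)
                 * exp (1 / (1 - q) * jackson_integral q
                     (\<lambda>s. (1 / s) * ln ((1 - (1 - q) * s * R s) / (1 - (1 - q) * s * T s))) t)) x)
         0
         (exp (1 / (1 - q) * jackson_integral q (\<lambda>t. ln (1 - (1 - q) * t * T t) / t) x))"
proof -
  have x0: "0 \<le> x" and xb: "ereal x < b" using x unfolding I_def by auto
  have sub: "{0..x} \<subseteq> I" unfolding I_def using xb by (auto intro: order.strict_trans1[rotated])
  have qk1: "q ^ k \<le> 1" for k :: nat using q by (simp add: power_le_one)
  have qkI: "q ^ k * x \<in> I" for k :: nat
    using sub qk1[of k] x0 q by (auto simp: mult_left_le_one_le)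
  obtain MR where MR: "\<And>y. y \<in> {0..x} \<Longrightarrow> \<bar>R y\<bar> \<le> MR"
    using bound_on[of x R] continuous_on_subset[OF cont(1) sub] by blast
  obtain MS where MS: "\<And>y. y \<in> {0..x} \<Longrightarrow> \<bar>S y\<bar> \<le> MS"
    using bound_on[of x S] continuous_on_subset[OF cont(2) sub] by blast
  obtain MT where MT: "\<And>y. y \<in> {0..x} \<Longrightarrow> \<bar>T y\<bar> \<le> MT"
    using bound_on[of x T] continuous_on_subset[OF cont(3) sub] by blast
  define rr where "rr k = 1 - (1 - q) * (q ^ k * x) * R (q ^ k * x)" for k
  define tt where "tt k = 1 - (1 - q) * (q ^ k * x) * T (q ^ k * x)" for k
  define ss where "ss k = - ((1 - q) * (q ^ k * x) * S (q ^ k * x))" for k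
  define A where "A n = (\<Prod>k<n. rr k)" for n
  define D where "D n = (\<Prod>k<n. tt k)" for n
  define c where "c k = ss k * D k / A (Suc k)" for k
  define Bn where "Bn n = A n * (\<Sum>k<n. c k)" for n
  have rpos: "rr k > 0" for k unfolding rr_def using posR[OF qkI[of k]] .
  have tpos: "tt k > 0" for k unfolding tt_def using posT[OF qkI[of k]] .
  have Apos: "A n > 0" for n unfolding A_def using rpos by (intro prod_pos) auto
  have Dpos: "D n > 0" for n unfolding D_def using tpos by (intro prod_pos) auto
  have ASuc: "A (Suc n) = rr n * A n" for n unfolding A_def by simp
  have DSuc: "D (Suc n) = tt n * D n" for n unfolding D_def by simp
  have prodeq: "Lam_prod q R S T x n = mat2 (A n) (Bn n) 0 (D n)" for n
  proof (induction n)
    case 0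
    then show ?case by (simp add: A_def D_def Bn_def mat2_one)
  next
    case (Suc n)
    have "Bn (Suc n) = rr n * Bn n + ss n * D n"
      using Apos[of n] rpos[of n] by (simp add: Bn_def c_def ASuc field_simps)
    thus ?case using Suc
      by (simp add: Lam_eq mat2_mult ASuc DSuc rr_def tt_def ss_def) (simp add: algebra_simps)
  qed
  define LR where "LR = (\<Sum>k. ln (rr k))"
  define LT where "LT = (\<Sum>k. ln (tt k))"
  have sumR: "summable (\<lambda>k. ln (rr k))"
  proof (rule ln_summable[OF rpos _ q])
    fix k show "\<bar>rr k - 1\<bar> \<le> ((1 - q) * x * MR) * q ^ k"
      using geom_bound[of x R MR q k, OF MR x0 q] by (simp add: rr_def)
  qed
  have sumT: "summable (\<lambda>k. ln (tt k))"
  proof (rule ln_summable[OF tpos _ q])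
    fix k show "\<bar>tt k - 1\<bar> \<le> ((1 - q) * x * MT) * q ^ k"
      using geom_bound[of x T MT q k, OF MT x0 q] by (simp add: tt_def)
  qed
  have Alim: "A \<longlonglongrightarrow> exp LR"
    unfolding A_def LR_def using prod_lim[OF rpos sumR] by simp
  have Dlim: "D \<longlonglongrightarrow> exp LT"
    unfolding D_def LT_def using prod_lim[OF tpos sumT] by simp
  have "(\<lambda>k. D k / A (Suc k)) \<longlonglongrightarrow> exp LT / exp LR"
    using Dlim Alim[THEN LIMSEQ_Suc] by (intro tendsto_divide) auto
  hence "Bseq (\<lambda>k. D k / A (Suc k))" by (intro convergent_imp_Bseq convergentI)
  then obtain K where K: "\<And>k. norm (D k / A (Suc k)) \<le> K" unfolding Bseq_def by blast
  have sumc: "summable c"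
  proof (rule summable_comparison_test)
    show "\<exists>N. \<forall>n\<ge>N. norm (c n) \<le> ((1 - q) * x * MS * K) * q ^ n"
    proof (intro exI allI impI)
      fix n
      have "norm (c n) = \<bar>ss n\<bar> * norm (D n / A (Suc n))"
        by (simp add: c_def abs_mult)
      also have "\<dots> \<le> (((1 - q) * x * MS) * q ^ n) * K"
      proof (rule mult_mono)
        show "\<bar>ss n\<bar> \<le> ((1 - q) * x * MS) * q ^ n"
          using geom_bound[of x S MS q n, OF MS x0 q] by (simp add: ss_def)
        thus "0 \<le> ((1 - q) * x * MS) * q ^ n" using abs_ge_zero order_trans by blast
      qed (use K[of n] in auto)
      finally show "norm (c n) \<le> ((1 - q) * x * MS * K) * q ^ n" by (simp add: algebra_simps)
    qed
    show "summable (\<lambda>n. ((1 - q) * x * MS * K) * q ^ n)"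
      using q by (intro summable_mult summable_geometric) auto
  qed
  have Blim: "Bn \<longlonglongrightarrow> exp LR * (\<Sum>k. c k)"
    unfolding Bn_def using Alim summable_LIMSEQ[OF sumc] by (intro tendsto_mult)
  have lim: "(\<lambda>n. Lam_prod q R S T x n) \<longlonglongrightarrow> mat2 (exp LR) (exp LR * (\<Sum>k. c k)) 0 (exp LT)"
    unfolding prodeq by (intro mat2_tendsto Alim Blim Dlim tendsto_const)
  have q1: "1 - q \<noteq> 0" using q by simp
  have JR: "jackson_integral q (\<lambda>t. ln (1 - (1 - q) * t * R t) / t) x = (1 - q) * LR"
  proof -
    have "(\<lambda>n. (1 - q) * q ^ n * x * (ln (1 - (1 - q) * (q ^ n * x) * R (q ^ n * x)) / (q ^ n * x)))
        = (\<lambda>n. (1 - q) * ln (rr n))"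
    proof
      fix n
      have "(1 - q) * q ^ n * x * (ln (1 - (1 - q) * (q ^ n * x) * R (q ^ n * x)) / (q ^ n * x))
          = (1 - q) * (q ^ n * x) * (ln (1 - (1 - q) * (q ^ n * x) * R (q ^ n * x)) / (q ^ n * x))"
        by (simp add: mult.assoc)
      also have "\<dots> = (1 - q) * ln (1 - (1 - q) * (q ^ n * x) * R (q ^ n * x))"
        by (rule cancel_y2) (use q in auto)
      finally show "(1 - q) * q ^ n * x * (ln (1 - (1 - q) * (q ^ n * x) * R (q ^ n * x)) / (q ^ n * x))
          = (1 - q) * ln (rr n)" by (simp add: rr_def)
    qed
    thus ?thesis unfolding jackson_integral_def LR_def using suminf_mult[OF sumR] by simp
  qed
  have JT: "jackson_integral q (\<lambda>t. ln (1 - (1 - q) * t * T t) / t) x = (1 - q) * LT"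
  proof -
    have "(\<lambda>n. (1 - q) * q ^ n * x * (ln (1 - (1 - q) * (q ^ n * x) * T (q ^ n * x)) / (q ^ n * x)))
        = (\<lambda>n. (1 - q) * ln (tt n))"
    proof
      fix n
      have "(1 - q) * q ^ n * x * (ln (1 - (1 - q) * (q ^ n * x) * T (q ^ n * x)) / (q ^ n * x))
          = (1 - q) * (q ^ n * x) * (ln (1 - (1 - q) * (q ^ n * x) * T (q ^ n * x)) / (q ^ n * x))"
        by (simp add: mult.assoc)
      also have "\<dots> = (1 - q) * ln (1 - (1 - q) * (q ^ n * x) * T (q ^ n * x))"
        by (rule cancel_y2) (use q in auto)
      finally show "(1 - q) * q ^ n * x * (ln (1 - (1 - q) * (q ^ n * x) * T (q ^ n * x)) / (q ^ n * x))
          = (1 - q) * ln (tt n)" by (simp add: tt_def)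
    qed
    thus ?thesis unfolding jackson_integral_def LT_def using suminf_mult[OF sumT] by simp
  qed
  have Jin: "exp (1 / (1 - q) * jackson_integral q
       (\<lambda>s. (1 / s) * ln ((1 - (1 - q) * s * R s) / (1 - (1 - q) * s * T s))) (q ^ k * x))
      = exp LR * D k / (A k * exp LT)" for k
  proof -
    have "(\<lambda>m. (1 - q) * q ^ m * (q ^ k * x) * (1 / (q ^ m * (q ^ k * x)) *
            ln ((1 - (1 - q) * (q ^ m * (q ^ k * x)) * R (q ^ m * (q ^ k * x))) /
                (1 - (1 - q) * (q ^ m * (q ^ k * x)) * T (q ^ m * (q ^ k * x))))))
        = (\<lambda>m. (1 - q) * (ln (rr (m + k)) - ln (tt (m + k))))"
    proof
      fix m
      have e: "q ^ m * (q ^ k * x) = q ^ (m + k) * x" by (simp add: power_add)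
      show "(1 - q) * q ^ m * (q ^ k * x) * (1 / (q ^ m * (q ^ k * x)) *
            ln ((1 - (1 - q) * (q ^ m * (q ^ k * x)) * R (q ^ m * (q ^ k * x))) /
                (1 - (1 - q) * (q ^ m * (q ^ k * x)) * T (q ^ m * (q ^ k * x)))))
         = (1 - q) * (ln (rr (m + k)) - ln (tt (m + k)))"
        unfolding e mult.assoc[of "1 - q" "q ^ m"] e
        using rpos[of "m + k"] tpos[of "m + k"] q
        by (subst cancel_y1) (auto simp: rr_def tt_def ln_div)
    qed
    moreover have s1: "summable (\<lambda>m. ln (rr (m + k)))" using summable_ignore_initial_segment[OF sumR] .
    moreover have s2: "summable (\<lambda>m. ln (tt (m + k)))" using summable_ignore_initial_segment[OF sumT] .
    ultimately have "1 / (1 - q) * jackson_integral q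
       (\<lambda>s. (1 / s) * ln ((1 - (1 - q) * s * R s) / (1 - (1 - q) * s * T s))) (q ^ k * x)
       = (\<Sum>m. ln (rr (m + k))) - (\<Sum>m. ln (tt (m + k)))"
      unfolding jackson_integral_def using q1
      by (simp add: suminf_mult summable_diff suminf_diff)
    also have "\<dots> = (LR - (\<Sum>i<k. ln (rr i))) - (LT - (\<Sum>i<k. ln (tt i)))"
      unfolding LR_def LT_def using suminf_split_initial_segment[OF sumR, of k]
        suminf_split_initial_segment[OF sumT, of k] by simp
    finally show ?thesis
      using rpos tpos by (simp add: exp_diff exp_sum A_def D_def)
  qed
  have JS: "jackson_integral q (\<lambda>t. S t / (1 - (1 - q) * t * R t)
                 * exp (1 / (1 - q) * jackson_integral q
                     (\<lambda>s. (1 / s) * ln ((1 - (1 - q) * s * R s) / (1 - (1 - q) * s * T s))) t)) x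
      = - (exp LR / exp LT) * (\<Sum>k. c k)"
  proof -
    have "(\<lambda>k. (1 - q) * q ^ k * x * (S (q ^ k * x) / (1 - (1 - q) * (q ^ k * x) * R (q ^ k * x))
                 * exp (1 / (1 - q) * jackson_integral q
                     (\<lambda>s. (1 / s) * ln ((1 - (1 - q) * s * R s) / (1 - (1 - q) * s * T s))) (q ^ k * x))))
        = (\<lambda>k. - (exp LR / exp LT) * c k)"
    proof
      fix k
      show "(1 - q) * q ^ k * x * (S (q ^ k * x) / (1 - (1 - q) * (q ^ k * x) * R (q ^ k * x))
                 * exp (1 / (1 - q) * jackson_integral q
                     (\<lambda>s. (1 / s) * ln ((1 - (1 - q) * s * R s) / (1 - (1 - q) * s * T s))) (q ^ k * x)))
         = - (exp LR / exp LT) * c k"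
      proof -
        have e: "1 - (1 - q) * (q ^ k * x) * R (q ^ k * x) = rr k" by (simp add: rr_def)
        have "rr k \<noteq> 0" "A k \<noteq> 0" using rpos[of k] Apos[of k] by auto
        thus ?thesis unfolding Jin e c_def ASuc ss_def
          by (simp add: field_simps)
      qed
    qed
    hence "jackson_integral q (\<lambda>t. S t / (1 - (1 - q) * t * R t)
                 * exp (1 / (1 - q) * jackson_integral q
                     (\<lambda>s. (1 / s) * ln ((1 - (1 - q) * s * R s) / (1 - (1 - q) * s * T s))) t)) x
       = (\<Sum>k. - (exp LR / exp LT) * c k)"
      by (simp only: jackson_integral_def[of q "\<lambda>t. S t / (1 - (1 - q) * t * R t)
                 * exp (1 / (1 - q) * jackson_integral q
                     (\<lambda>s. (1 / s) * ln ((1 - (1 - q) * s * R s) / (1 - (1 - q) * s * T s))) t)" x])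
    also have "\<dots> = - (exp LR / exp LT) * (\<Sum>k. c k)" by (rule suminf_mult[OF sumc])
    finally show ?thesis .
  qed
  have "mat2 (exp LR) (exp LR * (\<Sum>k. c k)) 0 (exp LT) =
    mat2 (exp (1 / (1 - q) * jackson_integral q (\<lambda>t. ln (1 - (1 - q) * t * R t) / t) x))
         (- exp (1 / (1 - q) * jackson_integral q (\<lambda>t. ln (1 - (1 - q) * t * T t) / t) x)
            * jackson_integral q (\<lambda>t. S t / (1 - (1 - q) * t * R t)
                 * exp (1 / (1 - q) * jackson_integral q
                     (\<lambda>s. (1 / s) * ln ((1 - (1 - q) * s * R s) / (1 - (1 - q) * s * T s))) t)) x)
         0
         (exp (1 / (1 - q) * jackson_integral q (\<lambda>t. ln (1 - (1 - q) * t * T t) / t) x))"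
    unfolding JR JT JS using q1 by simp
  with lim show ?thesis by simp
qed

end
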